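(* Let $\Bbbk$ be an algebraically closed field of characteristic $2$ and let $\mathfrak{u}(\mathfrak{m})$ be the algebra generated by $a,b,c$ with relations $ab+ba=c$, $ac+ca=a$, $bc+cb=b$, $a^4=b^4=0$, $c^2+c=0$. Then, up to isomorphism, the simple finite-dimensional left $\mathfrak{u}(\mathfrak{m})$-modules are exactly $V_0$ and $V_1$.
   Context: $V_0$ is the one-dimensional module on which $a,b,c$ act by $0$. $V_1$ is the three-dimensional module with basis $v_1,v_2,v_3$ and action $av_1=v_2$, $av_2=v_3$, $av_3=0$; $bv_1=0$, $bv_2=v_1$, $bv_3=v_2$; $cv_1=v_1$, $cv_2=0$, $cv_3=v_3$ (this is the adjoint representation on the $3$-dimensional Lie algebra with basis $b,c,a$). *)

theory Defs
  imports "HOL-Computational_Algebra.Polynomial" "Jordan_Normal_Form.Matrix"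
begin

text \<open>A finite-dimensional left module over u(m) = k<a,b,c> / (relations) is the same as
  a finite-dimensional k-vector space k^n with three endomorphisms (n x n matrices A, B, C,
  the actions of a, b, c) satisfying the defining relations.\<close>

definition um_module :: "nat \<Rightarrow> 'k::field mat \<Rightarrow> 'k mat \<Rightarrow> 'k mat \<Rightarrow> bool" where
  "um_module n A B C \<longleftrightarrow>
     A \<in> carrier_mat n n \<and> B \<in> carrier_mat n n \<and> C \<in> carrier_mat n n \<and>
     A * B + B * A = C \<and> A * C + C * A = A \<and> B * C + C * B = B \<and>
     A ^\<^sub>m 4 = 0\<^sub>m n n \<and> B ^\<^sub>m 4 = 0\<^sub>m n n \<and> C * C + C = 0\<^sub>m n n"

definition invariant_subspace :: "nat \<Rightarrow> 'k::field mat \<Rightarrow> 'k mat \<Rightarrow> 'k mat \<Rightarrow> 'k vec set \<Rightarrow> bool" where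
  "invariant_subspace n A B C W \<longleftrightarrow>
     W \<subseteq> carrier_vec n \<and> 0\<^sub>v n \<in> W \<and>
     (\<forall>x\<in>W. \<forall>y\<in>W. x + y \<in> W) \<and> (\<forall>s. \<forall>x\<in>W. s \<cdot>\<^sub>v x \<in> W) \<and>
     (\<forall>x\<in>W. A *\<^sub>v x \<in> W \<and> B *\<^sub>v x \<in> W \<and> C *\<^sub>v x \<in> W)"

definition simple_module :: "nat \<Rightarrow> 'k::field mat \<Rightarrow> 'k mat \<Rightarrow> 'k mat \<Rightarrow> bool" where
  "simple_module n A B C \<longleftrightarrow> um_module n A B C \<and> n > 0 \<and>
     (\<forall>W. invariant_subspace n A B C W \<longrightarrow> W = {0\<^sub>v n} \<or> W = carrier_vec n)"

definition module_iso :: "nat \<Rightarrow> 'k::field mat \<Rightarrow> 'k mat \<Rightarrow> 'k mat \<Rightarrow>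
                          nat \<Rightarrow> 'k mat \<Rightarrow> 'k mat \<Rightarrow> 'k mat \<Rightarrow> bool" where
  "module_iso n A B C m A' B' C' \<longleftrightarrow> n = m \<and>
     (\<exists>P \<in> carrier_mat n n. invertible_mat P \<and> P * A = A' * P \<and> P * B = B' * P \<and> P * C = C' * P)"

definition V0_a :: "'k::field mat" where "V0_a = 0\<^sub>m 1 1"
definition V0_b :: "'k::field mat" where "V0_b = 0\<^sub>m 1 1"
definition V0_c :: "'k::field mat" where "V0_c = 0\<^sub>m 1 1"

text \<open>V_1 with basis v1,v2,v3 (indices 0,1,2); entry (i,j) is the v_(i+1)-coefficient of
  the image of v_(j+1).  a v1 = v2, a v2 = v3, a v3 = 0; b v1 = 0, b v2 = v1, b v3 = v2;
  c v1 = v1, c v2 = 0, c v3 = v3.\<close>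
definition V1_a :: "'k::field mat" where
  "V1_a = mat 3 3 (\<lambda>(i,j). if (i,j) = (1,0) \<or> (i,j) = (2,1) then 1 else 0)"
definition V1_b :: "'k::field mat" where
  "V1_b = mat 3 3 (\<lambda>(i,j). if (i,j) = (0,1) \<or> (i,j) = (1,2) then 1 else 0)"
definition V1_c :: "'k::field mat" where
  "V1_c = mat 3 3 (\<lambda>(i,j). if (i,j) = (0,0) \<or> (i,j) = (2,2) then 1 else 0)"

end

theory Submission
  imports Defs "Jordan_Normal_Form.VS_Connect" "Jordan_Normal_Form.DL_Rank" begin
lemma char2_add_self:
  assumes "CHAR('k::field) = 2" shows "(x::'k) + x = 0"
proof -
  have "CHAR('k) dvd 2" using assms by simp
  then have "(of_nat 2::'k) = 0" by (simp only: of_nat_eq_0_iff_char_dvd)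
  then have "(2::'k) = 0" by simp
  then have "2 * x = 0" by simp
  then show ?thesis by (metis mult_2)
qed

lemma lt3: "(i::nat) < 3 \<Longrightarrow> i = 0 \<or> i = 1 \<or> i = 2" by auto

lemma mult3_entry:
  assumes "X \<in> carrier_mat 3 3" "Y \<in> carrier_mat 3 3" "i < 3" "j < 3"
  shows "(X * Y) $$ (i,j) = X$$(i,0)*Y$$(0,j) + X$$(i,1)*Y$$(1,j) + X$$(i,2)*Y$$(2,j)"
proof -
  have "(X * Y) $$ (i,j) = (\<Sum>k<3. X$$(i,k)*Y$$(k,j))"
    using assms by (simp add: scalar_prod_def lessThan_atLeast0)
  also have "\<dots> = X$$(i,0)*Y$$(0,j) + X$$(i,1)*Y$$(1,j) + X$$(i,2)*Y$$(2,j)"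
    by (simp add: numeral_3_eq_3 numeral_2_eq_2)
  finally show ?thesis .
qed

lemma V1_carrier[simp]: "V1_a \<in> carrier_mat 3 3" "V1_b \<in> carrier_mat 3 3" "V1_c \<in> carrier_mat 3 3"
  by (simp_all add: V1_a_def V1_b_def V1_c_def)

lemma V1_dims[simp]: "dim_row V1_a = 3" "dim_col V1_a = 3" "dim_row V1_b = 3" "dim_col V1_b = 3"
  "dim_row V1_c = 3" "dim_col V1_c = 3"
  by (simp_all add: V1_a_def V1_b_def V1_c_def)

lemma V1_entries[simp]:
  "i < 3 \<Longrightarrow> j < 3 \<Longrightarrow> (V1_a::'k::field mat) $$ (i,j) = (if (i,j) = (1,0) \<or> (i,j) = (2,1) then 1 else 0)"
  "i < 3 \<Longrightarrow> j < 3 \<Longrightarrow> (V1_b::'k::field mat) $$ (i,j) = (if (i,j) = (0,1) \<or> (i,j) = (1,2) then 1 else 0)"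
  "i < 3 \<Longrightarrow> j < 3 \<Longrightarrow> (V1_c::'k::field mat) $$ (i,j) = (if (i,j) = (0,0) \<or> (i,j) = (2,2) then 1 else 0)"
  by (simp_all add: V1_a_def V1_b_def V1_c_def)

lemma V1_prods:
  assumes "CHAR('k::field) = 2"
  shows "(V1_a::'k mat) * V1_b + V1_b * V1_a = V1_c"
proof (rule eq_matI)
  fix i j assume "i < dim_row V1_c" "j < dim_col (V1_c::'k mat)"
  then have ij: "i < 3" "j < 3" by (auto simp: V1_c_def)
  show "(V1_a * V1_b + V1_b * V1_a) $$ (i, j) = (V1_c::'k mat) $$ (i, j)"
    using lt3[OF ij(1)] lt3[OF ij(2)] char2_add_self[OF assms, of 1]
    by (elim disjE) (simp_all add: mult3_entry del: index_mult_mat(1))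
qed auto

lemma pow4: "X \<in> carrier_mat n n \<Longrightarrow> X ^\<^sub>m 4 = X * X * X * X"
  by (simp add: eval_nat_numeral)

lemma V1_rels:
  assumes "CHAR('k::field) = 2"
  shows "(V1_a::'k mat) * V1_c + V1_c * V1_a = V1_a"
    "(V1_b::'k mat) * V1_c + V1_c * V1_b = V1_b"
    "(V1_c::'k mat) * V1_c + V1_c = 0\<^sub>m 3 3"
    "(V1_a::'k mat) * V1_a * V1_a = 0\<^sub>m 3 3"
    "(V1_b::'k mat) * V1_b * V1_b = 0\<^sub>m 3 3"
proof -
  have c2: "(1::'k) + 1 = 0" using char2_add_self[OF assms] .
  show "(V1_a::'k mat) * V1_c + V1_c * V1_a = V1_a"
  proof (rule eq_matI)
    fix i j assume "i < dim_row (V1_a::'k mat)" "j < dim_col (V1_a::'k mat)"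
    then have ij: "i < 3" "j < 3" by auto
    show "(V1_a * V1_c + V1_c * V1_a) $$ (i, j) = (V1_a::'k mat) $$ (i, j)"
      using lt3[OF ij(1)] lt3[OF ij(2)] c2
      by (elim disjE) (simp_all add: mult3_entry del: index_mult_mat(1))
  qed auto
  show "(V1_b::'k mat) * V1_c + V1_c * V1_b = V1_b"
  proof (rule eq_matI)
    fix i j assume "i < dim_row (V1_b::'k mat)" "j < dim_col (V1_b::'k mat)"
    then have ij: "i < 3" "j < 3" by auto
    show "(V1_b * V1_c + V1_c * V1_b) $$ (i, j) = (V1_b::'k mat) $$ (i, j)"
      using lt3[OF ij(1)] lt3[OF ij(2)] c2
      by (elim disjE) (simp_all add: mult3_entry del: index_mult_mat(1))
  qed auto
  show "(V1_c::'k mat) * V1_c + V1_c = 0\<^sub>m 3 3"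
  proof (rule eq_matI)
    fix i j assume "i < dim_row (0\<^sub>m 3 3::'k mat)" "j < dim_col (0\<^sub>m 3 3::'k mat)"
    then have ij: "i < 3" "j < 3" by auto
    show "(V1_c * V1_c + V1_c) $$ (i, j) = (0\<^sub>m 3 3::'k mat) $$ (i, j)"
      using lt3[OF ij(1)] lt3[OF ij(2)] c2
      by (elim disjE) (simp_all add: mult3_entry del: index_mult_mat(1))
  qed auto
  have aa: "(V1_a::'k mat) * V1_a = mat 3 3 (\<lambda>(i,j). if (i,j) = (2,0) then 1 else 0)"
  proof (rule eq_matI)
    fix i j assume "i < dim_row (mat 3 3 (\<lambda>(i,j). if (i,j) = (2,0) then 1 else (0::'k)))"
       "j < dim_col (mat 3 3 (\<lambda>(i,j). if (i,j) = (2,0) then 1 else (0::'k)))"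
    then have ij: "i < 3" "j < 3" by auto
    show "(V1_a * V1_a) $$ (i, j) = (mat 3 3 (\<lambda>(i,j). if (i,j) = (2,0) then 1 else (0::'k))) $$ (i, j)"
      using lt3[OF ij(1)] lt3[OF ij(2)]
      by (elim disjE) (simp_all add: mult3_entry del: index_mult_mat(1))
  qed auto
  show "(V1_a::'k mat) * V1_a * V1_a = 0\<^sub>m 3 3"
    unfolding aa
  proof (rule eq_matI)
    fix i j assume "i < dim_row (0\<^sub>m 3 3::'k mat)" "j < dim_col (0\<^sub>m 3 3::'k mat)"
    then have ij: "i < 3" "j < 3" by auto
    show "(mat 3 3 (\<lambda>(i,j). if (i,j) = (2,0) then 1 else (0::'k)) * V1_a) $$ (i, j) = (0\<^sub>m 3 3::'k mat) $$ (i, j)"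
      using lt3[OF ij(1)] lt3[OF ij(2)]
      by (elim disjE) (simp_all add: mult3_entry del: index_mult_mat(1))
  qed auto
  have bb: "(V1_b::'k mat) * V1_b = mat 3 3 (\<lambda>(i,j). if (i,j) = (0,2) then 1 else 0)"
  proof (rule eq_matI)
    fix i j assume "i < dim_row (mat 3 3 (\<lambda>(i,j). if (i,j) = (0,2) then 1 else (0::'k)))"
       "j < dim_col (mat 3 3 (\<lambda>(i,j). if (i,j) = (0,2) then 1 else (0::'k)))"
    then have ij: "i < 3" "j < 3" by auto
    show "(V1_b * V1_b) $$ (i, j) = (mat 3 3 (\<lambda>(i,j). if (i,j) = (0,2) then 1 else (0::'k))) $$ (i, j)"
      using lt3[OF ij(1)] lt3[OF ij(2)]
      by (elim disjE) (simp_all add: mult3_entry del: index_mult_mat(1))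
  qed auto
  show "(V1_b::'k mat) * V1_b * V1_b = 0\<^sub>m 3 3"
    unfolding bb
  proof (rule eq_matI)
    fix i j assume "i < dim_row (0\<^sub>m 3 3::'k mat)" "j < dim_col (0\<^sub>m 3 3::'k mat)"
    then have ij: "i < 3" "j < 3" by auto
    show "(mat 3 3 (\<lambda>(i,j). if (i,j) = (0,2) then 1 else (0::'k)) * V1_b) $$ (i, j) = (0\<^sub>m 3 3::'k mat) $$ (i, j)"
      using lt3[OF ij(1)] lt3[OF ij(2)]
      by (elim disjE) (simp_all add: mult3_entry del: index_mult_mat(1))
  qed auto
qed

lemma V1_um:
  assumes "CHAR('k::field) = 2"
  shows "um_module 3 (V1_a::'k mat) V1_b V1_c"
proof -
  have a4: "(V1_a::'k mat) ^\<^sub>m 4 = 0\<^sub>m 3 3"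
    unfolding pow4[OF V1_carrier(1)] V1_rels(4)[OF assms] by simp
  have b4: "(V1_b::'k mat) ^\<^sub>m 4 = 0\<^sub>m 3 3"
    unfolding pow4[OF V1_carrier(2)] V1_rels(5)[OF assms] by simp
  show ?thesis unfolding um_module_def
    using a4 b4 V1_rels[OF assms] V1_prods[OF assms] by simp
qed

lemma V0_um: "um_module 1 (V0_a::'k::field mat) V0_b V0_c"
  unfolding um_module_def V0_a_def V0_b_def V0_c_def
  by (simp add: pow4[OF zero_carrier_mat])


definition span3 :: "'k::field vec \<Rightarrow> 'k vec \<Rightarrow> 'k vec \<Rightarrow> 'k vec set" where
  "span3 u1 u2 u3 = {x. \<exists>a b c. x = a \<cdot>\<^sub>v u1 + b \<cdot>\<^sub>v u2 + c \<cdot>\<^sub>v u3}"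

lemma span3_I: "a \<cdot>\<^sub>v u1 + b \<cdot>\<^sub>v u2 + c \<cdot>\<^sub>v u3 \<in> span3 u1 u2 u3"
  unfolding span3_def by blast

lemma span3_mem:
  assumes u: "u1 \<in> carrier_vec n" "u2 \<in> carrier_vec n" "u3 \<in> carrier_vec n"
  shows "u1 \<in> span3 u1 u2 u3" "u2 \<in> span3 u1 u2 u3" "u3 \<in> span3 u1 u2 u3"
    "0\<^sub>v n \<in> span3 u1 u2 u3"
proof -
  have "u1 = 1 \<cdot>\<^sub>v u1 + 0 \<cdot>\<^sub>v u2 + 0 \<cdot>\<^sub>v u3" using u by (intro eq_vecI) auto
  then show "u1 \<in> span3 u1 u2 u3" by (metis span3_I)
  have "u2 = 0 \<cdot>\<^sub>v u1 + 1 \<cdot>\<^sub>v u2 + 0 \<cdot>\<^sub>v u3" using u by (intro eq_vecI) auto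
  then show "u2 \<in> span3 u1 u2 u3" by (metis span3_I)
  have "u3 = 0 \<cdot>\<^sub>v u1 + 0 \<cdot>\<^sub>v u2 + 1 \<cdot>\<^sub>v u3" using u by (intro eq_vecI) auto
  then show "u3 \<in> span3 u1 u2 u3" by (metis span3_I)
  have "0\<^sub>v n = 0 \<cdot>\<^sub>v u1 + 0 \<cdot>\<^sub>v u2 + 0 \<cdot>\<^sub>v u3" using u by (intro eq_vecI) auto
  then show "0\<^sub>v n \<in> span3 u1 u2 u3" by (metis span3_I)
qed

lemma span3_carrier:
  assumes u: "u1 \<in> carrier_vec n" "u2 \<in> carrier_vec n" "u3 \<in> carrier_vec n"
  shows "span3 u1 u2 u3 \<subseteq> carrier_vec n"
  using u unfolding span3_def by auto

lemma span3_add: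
  assumes u: "u1 \<in> carrier_vec n" "u2 \<in> carrier_vec n" "u3 \<in> carrier_vec n"
    and x: "x \<in> span3 u1 u2 u3" and y: "y \<in> span3 u1 u2 u3"
  shows "x + y \<in> span3 u1 u2 u3"
proof -
  obtain a b c where x: "x = a \<cdot>\<^sub>v u1 + b \<cdot>\<^sub>v u2 + c \<cdot>\<^sub>v u3" using x unfolding span3_def by auto
  obtain a' b' c' where y: "y = a' \<cdot>\<^sub>v u1 + b' \<cdot>\<^sub>v u2 + c' \<cdot>\<^sub>v u3" using y unfolding span3_def by auto
  have "x + y = (a + a') \<cdot>\<^sub>v u1 + (b + b') \<cdot>\<^sub>v u2 + (c + c') \<cdot>\<^sub>v u3"
    unfolding x y using u by (intro eq_vecI) (auto simp: algebra_simps)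
  then show ?thesis by (metis span3_I)
qed

lemma span3_smult:
  assumes u: "u1 \<in> carrier_vec n" "u2 \<in> carrier_vec n" "u3 \<in> carrier_vec n"
    and x: "x \<in> span3 u1 u2 u3"
  shows "s \<cdot>\<^sub>v x \<in> span3 u1 u2 u3"
proof -
  obtain a b c where x: "x = a \<cdot>\<^sub>v u1 + b \<cdot>\<^sub>v u2 + c \<cdot>\<^sub>v u3" using x unfolding span3_def by auto
  have "s \<cdot>\<^sub>v x = (s * a) \<cdot>\<^sub>v u1 + (s * b) \<cdot>\<^sub>v u2 + (s * c) \<cdot>\<^sub>v u3"
    unfolding x using u by (intro eq_vecI) (auto simp: algebra_simps)
  then show ?thesis by (metis span3_I)
qed

lemma span3_mat:
  assumes M: "M \<in> carrier_mat n n" and u: "u1 \<in> carrier_vec n" "u2 \<in> carrier_vec n" "u3 \<in> carrier_vec n"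
  and h: "M *\<^sub>v u1 \<in> span3 u1 u2 u3" "M *\<^sub>v u2 \<in> span3 u1 u2 u3" "M *\<^sub>v u3 \<in> span3 u1 u2 u3"
  and x: "x \<in> span3 u1 u2 u3"
  shows "M *\<^sub>v x \<in> span3 u1 u2 u3"
proof -
  obtain a b c where x: "x = a \<cdot>\<^sub>v u1 + b \<cdot>\<^sub>v u2 + c \<cdot>\<^sub>v u3" using x unfolding span3_def by auto
  obtain a1 b1 c1 where 1: "M *\<^sub>v u1 = a1 \<cdot>\<^sub>v u1 + b1 \<cdot>\<^sub>v u2 + c1 \<cdot>\<^sub>v u3" using h(1) unfolding span3_def by auto
  obtain a2 b2 c2 where 2: "M *\<^sub>v u2 = a2 \<cdot>\<^sub>v u1 + b2 \<cdot>\<^sub>v u2 + c2 \<cdot>\<^sub>v u3" using h(2) unfolding span3_def by auto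
  obtain a3 b3 c3 where 3: "M *\<^sub>v u3 = a3 \<cdot>\<^sub>v u1 + b3 \<cdot>\<^sub>v u2 + c3 \<cdot>\<^sub>v u3" using h(3) unfolding span3_def by auto
  have "M *\<^sub>v x = a \<cdot>\<^sub>v (M *\<^sub>v u1) + (b \<cdot>\<^sub>v (M *\<^sub>v u2) + c \<cdot>\<^sub>v (M *\<^sub>v u3))"
    unfolding x using M u by (simp add: mult_add_distrib_mat_vec mult_mat_vec)
  also have "\<dots> = (a*a1 + b*a2 + c*a3) \<cdot>\<^sub>v u1 + (a*b1+b*b2+c*b3) \<cdot>\<^sub>v u2 + (a*c1+b*c2+c*c3) \<cdot>\<^sub>v u3"
    unfolding 1 2 3 using u by (intro eq_vecI; simp add: algebra_simps)
  finally show ?thesis by (metis span3_I)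
qed

lemma span3_inv:
  assumes M: "A \<in> carrier_mat n n" "B \<in> carrier_mat n n" "C \<in> carrier_mat n n"
    and u: "u1 \<in> carrier_vec n" "u2 \<in> carrier_vec n" "u3 \<in> carrier_vec n"
    and hA: "A *\<^sub>v u1 \<in> span3 u1 u2 u3" "A *\<^sub>v u2 \<in> span3 u1 u2 u3" "A *\<^sub>v u3 \<in> span3 u1 u2 u3"
    and hB: "B *\<^sub>v u1 \<in> span3 u1 u2 u3" "B *\<^sub>v u2 \<in> span3 u1 u2 u3" "B *\<^sub>v u3 \<in> span3 u1 u2 u3"
    and hC: "C *\<^sub>v u1 \<in> span3 u1 u2 u3" "C *\<^sub>v u2 \<in> span3 u1 u2 u3" "C *\<^sub>v u3 \<in> span3 u1 u2 u3"
  shows "invariant_subspace n A B C (span3 u1 u2 u3)"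
  unfolding invariant_subspace_def
proof (intro conjI ballI allI)
  show "span3 u1 u2 u3 \<subseteq> carrier_vec n" by (rule span3_carrier[OF u])
  show "0\<^sub>v n \<in> span3 u1 u2 u3" by (rule span3_mem(4)[OF u])
  fix x assume x: "x \<in> span3 u1 u2 u3"
  show "A *\<^sub>v x \<in> span3 u1 u2 u3" by (rule span3_mat[OF M(1) u hA x])
  show "B *\<^sub>v x \<in> span3 u1 u2 u3" by (rule span3_mat[OF M(2) u hB x])
  show "C *\<^sub>v x \<in> span3 u1 u2 u3" by (rule span3_mat[OF M(3) u hC x])
  fix s show "s \<cdot>\<^sub>v x \<in> span3 u1 u2 u3" by (rule span3_smult[OF u x])
next
  fix x y assume "x \<in> span3 u1 u2 u3" "y \<in> span3 u1 u2 u3"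
  then show "x + y \<in> span3 u1 u2 u3" by (rule span3_add[OF u])
qed

lemma nonzero_comp:
  assumes "w \<in> carrier_vec n" "w \<noteq> 0\<^sub>v n" shows "\<exists>i<n. w $ i \<noteq> 0"
proof (rule ccontr)
  assume "\<not> (\<exists>i<n. w $ i \<noteq> 0)"
  then have "w = 0\<^sub>v n" using assms(1) by (intro eq_vecI) auto
  then show False using assms(2) by simp
qed

lemma inv_nonzero:
  assumes "invariant_subspace n A B C W" "W \<noteq> {0\<^sub>v n}"
  obtains w where "w \<in> W" "w \<in> carrier_vec n" "w \<noteq> 0\<^sub>v n"
  using assms unfolding invariant_subspace_def by blast

lemma V0_simple: "simple_module 1 (V0_a::'k::field mat) V0_b V0_c"
  unfolding simple_module_def
proof (intro conjI allI impI V0_um)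
  fix W assume W: "invariant_subspace 1 (V0_a::'k mat) V0_b V0_c W"
  show "W = {0\<^sub>v 1} \<or> W = carrier_vec 1"
  proof (cases "W = {0\<^sub>v 1}")
    case False
    obtain w where w: "w \<in> W" "w \<in> carrier_vec 1" "w \<noteq> 0\<^sub>v 1" using inv_nonzero[OF W False] .
    then obtain i where "i < 1" "w $ i \<noteq> 0" using nonzero_comp by blast
    then have w0: "w $ 0 \<noteq> 0" by simp
    have "carrier_vec 1 \<subseteq> W"
    proof
      fix v :: "'k vec" assume v: "v \<in> carrier_vec 1"
      have "v = (v $ 0 / w $ 0) \<cdot>\<^sub>v w" using v w w0 by (intro eq_vecI) auto
      moreover have "(v $ 0 / w $ 0) \<cdot>\<^sub>v w \<in> W" using W w(1) unfolding invariant_subspace_def by blast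
      ultimately show "v \<in> W" by simp
    qed
    then show ?thesis using W unfolding invariant_subspace_def by blast
  qed simp
qed simp


lemma mult3_vec:
  assumes "X \<in> carrier_mat 3 3" "w \<in> carrier_vec 3" "i < 3"
  shows "(X *\<^sub>v w) $ i = X$$(i,0)*w$0 + X$$(i,1)*w$1 + X$$(i,2)*w$2"
proof -
  have "(X *\<^sub>v w) $ i = (\<Sum>k<3. X$$(i,k)*w$k)"
    using assms by (simp add: scalar_prod_def lessThan_atLeast0)
  also have "\<dots> = X$$(i,0)*w$0 + X$$(i,1)*w$1 + X$$(i,2)*w$2"
    by (simp add: numeral_3_eq_3 numeral_2_eq_2)
  finally show ?thesis .
qed

lemma V1_simple:
  assumes "CHAR('k::field) = 2"
  shows "simple_module 3 (V1_a::'k mat) V1_b V1_c"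
  unfolding simple_module_def
proof (intro conjI allI impI V1_um[OF assms])
  fix W assume W: "invariant_subspace 3 (V1_a::'k mat) V1_b V1_c W"
  have Wc: "W \<subseteq> carrier_vec 3" using W unfolding invariant_subspace_def by blast
  have Wadd: "\<And>x y. x \<in> W \<Longrightarrow> y \<in> W \<Longrightarrow> x + y \<in> W" using W unfolding invariant_subspace_def by blast
  have Wsm: "\<And>s x. x \<in> W \<Longrightarrow> s \<cdot>\<^sub>v x \<in> W" using W unfolding invariant_subspace_def by blast
  have WA: "\<And>x. x \<in> W \<Longrightarrow> V1_a *\<^sub>v x \<in> W" using W unfolding invariant_subspace_def by blast
  have WB: "\<And>x. x \<in> W \<Longrightarrow> V1_b *\<^sub>v x \<in> W" using W unfolding invariant_subspace_def by blast
  have WC: "\<And>x. x \<in> W \<Longrightarrow> V1_c *\<^sub>v x \<in> W" using W unfolding invariant_subspace_def by blast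
  show "W = {0\<^sub>v 3} \<or> W = carrier_vec 3"
  proof (cases "W = {0\<^sub>v 3}")
    case False
    obtain w where w: "w \<in> W" "w \<in> carrier_vec 3" "w \<noteq> 0\<^sub>v 3" using inv_nonzero[OF W False] .
    obtain i where i: "i < 3" "w $ i \<noteq> 0" using nonzero_comp[OF w(2,3)] by blast
    have "\<exists>u t. u \<in> W \<and> t \<noteq> 0 \<and> u = t \<cdot>\<^sub>v unit_vec 3 1"
    proof (cases "w $ 1 = 0")
      case False
      let ?u = "w + (-1) \<cdot>\<^sub>v (V1_c *\<^sub>v w)"
      have "?u \<in> W" using w(1) by (intro Wadd Wsm WC)
      moreover have "?u = (w $ 1) \<cdot>\<^sub>v unit_vec 3 1"
      proof (rule eq_vecI)
        fix j assume "j < dim_vec ((w $ 1) \<cdot>\<^sub>v unit_vec 3 (1::nat) :: 'k vec)"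
        then have j: "j < 3" by simp
        show "?u $ j = ((w $ 1) \<cdot>\<^sub>v unit_vec 3 1) $ j"
          using lt3[OF j] j w(2) by (elim disjE) (simp_all add: mult3_vec del: index_mult_mat_vec)
      qed (use w(2) in simp)
      ultimately show ?thesis using False by blast
    next
      case y0: True
      show ?thesis
      proof (cases "w $ 0 = 0")
        case False
        let ?u = "V1_a *\<^sub>v w"
        have "?u \<in> W" using w(1) by (intro WA)
        moreover have "?u = (w $ 0) \<cdot>\<^sub>v unit_vec 3 1"
        proof (rule eq_vecI)
          fix j assume "j < dim_vec ((w $ 0) \<cdot>\<^sub>v unit_vec 3 (1::nat) :: 'k vec)"
          then have j: "j < 3" by simp
          show "?u $ j = ((w $ 0) \<cdot>\<^sub>v unit_vec 3 1) $ j"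
            using lt3[OF j] j w(2) y0 by (elim disjE) (simp_all add: mult3_vec del: index_mult_mat_vec)
        qed simp
        ultimately show ?thesis using False by blast
      next
        case x0: True
        then have z: "w $ 2 \<noteq> 0" using y0 i lt3[OF i(1)] by auto
        let ?u = "V1_b *\<^sub>v w"
        have "?u \<in> W" using w(1) by (intro WB)
        moreover have "?u = (w $ 2) \<cdot>\<^sub>v unit_vec 3 1"
        proof (rule eq_vecI)
          fix j assume "j < dim_vec ((w $ 2) \<cdot>\<^sub>v unit_vec 3 (1::nat) :: 'k vec)"
          then have j: "j < 3" by simp
          show "?u $ j = ((w $ 2) \<cdot>\<^sub>v unit_vec 3 1) $ j"
            using lt3[OF j] j w(2) y0 by (elim disjE) (simp_all add: mult3_vec del: index_mult_mat_vec)
        qed simp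
        ultimately show ?thesis using z by blast
      qed
    qed
    then obtain u t where u: "u \<in> W" "t \<noteq> 0" "u = t \<cdot>\<^sub>v unit_vec 3 1" by blast
    have "unit_vec 3 1 = (1 / t) \<cdot>\<^sub>v u" using u(2,3) by (intro eq_vecI) auto
    then have e1: "unit_vec 3 1 \<in> W" using Wsm[OF u(1)] by simp
    have "unit_vec 3 2 = (V1_a :: 'k mat) *\<^sub>v unit_vec 3 1"
    proof (rule eq_vecI)
      fix j assume "j < dim_vec (V1_a *\<^sub>v unit_vec 3 (1::nat) :: 'k vec)"
      then have j: "j < 3" by simp
      show "unit_vec 3 2 $ j = ((V1_a :: 'k mat) *\<^sub>v unit_vec 3 1) $ j"
        using lt3[OF j] j by (elim disjE) (simp_all add: mult3_vec del: index_mult_mat_vec)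
    qed simp
    then have e2: "unit_vec 3 2 \<in> W" using WA[OF e1] by simp
    have "unit_vec 3 0 = (V1_b :: 'k mat) *\<^sub>v unit_vec 3 1"
    proof (rule eq_vecI)
      fix j assume "j < dim_vec (V1_b *\<^sub>v unit_vec 3 (1::nat) :: 'k vec)"
      then have j: "j < 3" by simp
      show "unit_vec 3 0 $ j = ((V1_b :: 'k mat) *\<^sub>v unit_vec 3 1) $ j"
        using lt3[OF j] j by (elim disjE) (simp_all add: mult3_vec del: index_mult_mat_vec)
    qed simp
    then have e0: "unit_vec 3 0 \<in> W" using WB[OF e1] by simp
    have "carrier_vec 3 \<subseteq> W"
    proof
      fix v :: "'k vec" assume v: "v \<in> carrier_vec 3"
      have "v = v $ 0 \<cdot>\<^sub>v unit_vec 3 0 + v $ 1 \<cdot>\<^sub>v unit_vec 3 1 + v $ 2 \<cdot>\<^sub>v unit_vec 3 2"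
      proof (rule eq_vecI)
        fix j assume "j < dim_vec (v $ 0 \<cdot>\<^sub>v unit_vec 3 0 + v $ 1 \<cdot>\<^sub>v unit_vec 3 1 + v $ 2 \<cdot>\<^sub>v unit_vec 3 (2::nat))"
        then have j: "j < 3" by simp
        show "v $ j = (v $ 0 \<cdot>\<^sub>v unit_vec 3 0 + v $ 1 \<cdot>\<^sub>v unit_vec 3 1 + v $ 2 \<cdot>\<^sub>v unit_vec 3 2) $ j"
          using lt3[OF j] j by (elim disjE) simp_all
      qed (use v in simp)
      moreover have "v $ 0 \<cdot>\<^sub>v unit_vec 3 0 + v $ 1 \<cdot>\<^sub>v unit_vec 3 1 + v $ 2 \<cdot>\<^sub>v unit_vec 3 2 \<in> W"
        using e0 e1 e2 by (intro Wadd Wsm)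
      ultimately show "v \<in> W" by simp
    qed
    then show ?thesis using Wc by blast
  qed simp
qed simp


lemma mat_vec_zero: "M \<in> carrier_mat n n \<Longrightarrow> M *\<^sub>v 0\<^sub>v n = (0\<^sub>v n :: 'k::field vec)"
  by (intro eq_vecI) (auto simp: scalar_prod_def)

lemma vcancel_l:
  assumes "x \<in> carrier_vec n" "y \<in> carrier_vec n" "x + y = (x :: 'k::field vec)"
  shows "y = 0\<^sub>v n"
proof (rule eq_vecI)
  fix i assume i: "i < dim_vec (0\<^sub>v n :: 'k vec)"
  have "(x + y) $ i = x $ i" using assms(3) by simp
  then show "y $ i = 0\<^sub>v n $ i" using i assms(1,2) by simp
qed (use assms in simp)

lemma vcancel_r:
  assumes "x \<in> carrier_vec n" "y \<in> carrier_vec n" "x + y = (y :: 'k::field vec)"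
  shows "x = 0\<^sub>v n"
proof (rule eq_vecI)
  fix i assume i: "i < dim_vec (0\<^sub>v n :: 'k vec)"
  have "(x + y) $ i = y $ i" using assms(3) by simp
  then show "x $ i = 0\<^sub>v n $ i" using i assms(1,2) by simp
qed (use assms in simp)

lemma vchar2:
  assumes "CHAR('k::field) = 2" "x \<in> carrier_vec n" "y \<in> carrier_vec n" "x + y = (0\<^sub>v n :: 'k vec)"
  shows "x = y"
proof (rule eq_vecI)
  fix i assume i: "i < dim_vec y"
  have "(x + y) $ i = 0" using assms(4) i assms(3) by simp
  then have "x $ i + y $ i = 0" using i assms(2,3) by simp
  then have "x $ i + y $ i + y $ i = y $ i" by simp
  then show "x $ i = y $ i" using char2_add_self[OF assms(1), of "y $ i"] by (simp add: add.assoc)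
qed (use assms in simp)

lemma smult_zero_imp:
  assumes "v \<in> carrier_vec n" "v \<noteq> 0\<^sub>v n" "s \<cdot>\<^sub>v v = (0\<^sub>v n :: 'k::field vec)"
  shows "s = 0"
proof -
  obtain i where i: "i < n" "v $ i \<noteq> 0" using nonzero_comp[OF assms(1,2)] by blast
  have "(s \<cdot>\<^sub>v v) $ i = 0" using assms(3) i by simp
  then show ?thesis using i assms(1) by simp
qed

lemma dim_le3:
  assumes sp: "span3 u1 u2 u3 = carrier_vec n"
    and u: "u1 \<in> carrier_vec n" "u2 \<in> carrier_vec n" "u3 \<in> (carrier_vec n :: 'k::field vec set)"
  shows "n \<le> card {u1,u2,u3}"
proof -
  interpret vec_space "TYPE('k)" n .
  have S: "{u1,u2,u3} \<subseteq> carrier_vec n" using u by auto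
  have own: "{u1,u2,u3} \<subseteq> span {u1,u2,u3}" using in_own_span[OF S] by simp
  have "carrier_vec n \<subseteq> span {u1,u2,u3}"
  proof
    fix x :: "'k vec" assume "x \<in> carrier_vec n"
    then have "x \<in> span3 u1 u2 u3" using sp by simp
    then obtain a b c where x: "x = a \<cdot>\<^sub>v u1 + b \<cdot>\<^sub>v u2 + c \<cdot>\<^sub>v u3" unfolding span3_def by blast
    have 1: "a \<cdot>\<^sub>v u1 \<in> span {u1,u2,u3}" using smult_in_span[OF S] own by auto
    have 2: "b \<cdot>\<^sub>v u2 \<in> span {u1,u2,u3}" using smult_in_span[OF S] own by auto
    have 3: "c \<cdot>\<^sub>v u3 \<in> span {u1,u2,u3}" using smult_in_span[OF S] own by auto
    have "a \<cdot>\<^sub>v u1 + b \<cdot>\<^sub>v u2 \<in> span {u1,u2,u3}" using span_add1[OF _ 1 2] S by simp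
    then have "a \<cdot>\<^sub>v u1 + b \<cdot>\<^sub>v u2 + c \<cdot>\<^sub>v u3 \<in> span {u1,u2,u3}" using span_add1[OF _ _ 3] S by simp
    then show "x \<in> span {u1,u2,u3}" using x by simp
  qed
  moreover have "span {u1,u2,u3} \<subseteq> carrier_vec n" using span_closed[OF S] by auto
  ultimately have "span {u1,u2,u3} = carrier_vec n" by blast
  then have "dim \<le> card {u1,u2,u3}" using gen_ge_dim[of "{u1,u2,u3}"] S by simp
  then show ?thesis using dim_is_n by simp
qed

lemma mat_of_cols3_mult:
  assumes q: "q0 \<in> carrier_vec n" "q1 \<in> carrier_vec n" "q2 \<in> carrier_vec n" and y: "y \<in> carrier_vec 3"
  shows "mat_of_cols n [q0,q1,q2] *\<^sub>v y = y $ 0 \<cdot>\<^sub>v q0 + y $ 1 \<cdot>\<^sub>v q1 + (y $ 2 \<cdot>\<^sub>v q2 :: 'k::field vec)"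
proof (rule eq_vecI)
  fix i assume "i < dim_vec (y $ 0 \<cdot>\<^sub>v q0 + y $ 1 \<cdot>\<^sub>v q1 + (y $ 2 \<cdot>\<^sub>v q2 :: 'k vec))"
  then have i: "i < n" using q by simp
  have "(mat_of_cols n [q0,q1,q2] *\<^sub>v y) $ i = (\<Sum>k<3. [q0,q1,q2] ! k $ i * y $ k)"
    using i y by (simp add: scalar_prod_def lessThan_atLeast0 mat_of_cols_def)
  also have "\<dots> = q0 $ i * y $ 0 + q1 $ i * y $ 1 + q2 $ i * y $ 2"
    by (simp add: numeral_3_eq_3 numeral_2_eq_2)
  finally show "(mat_of_cols n [q0,q1,q2] *\<^sub>v y) $ i = (y $ 0 \<cdot>\<^sub>v q0 + y $ 1 \<cdot>\<^sub>v q1 + y $ 2 \<cdot>\<^sub>v q2) $ i"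
    using i q by (simp add: mult.commute)
qed (use q in simp)

lemma lin_indpt3_dim:
  assumes q: "q0 \<in> carrier_vec n" "q1 \<in> carrier_vec n" "q2 \<in> carrier_vec n"
    and dist: "distinct [q0,q1,q2]"
    and ind: "\<And>a b c. a \<cdot>\<^sub>v q0 + b \<cdot>\<^sub>v q1 + c \<cdot>\<^sub>v q2 = (0\<^sub>v n :: 'k::field vec) \<Longrightarrow> a = 0 \<and> b = 0 \<and> c = 0"
  shows "3 \<le> n"
proof -
  interpret vec_space "TYPE('k)" n .
  let ?Q = "mat_of_cols n [q0,q1,q2]"
  have Qc: "?Q \<in> carrier_mat n 3" by (rule carrier_matI) auto
  have cols: "cols ?Q = [q0,q1,q2]" using q by (intro cols_mat_of_cols) auto
  have li: "lin_indpt (set (cols ?Q))"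
  proof
    assume "lin_dep (set (cols ?Q))"
    from lin_depE[OF Qc this] dist cols obtain y where y: "y \<in> carrier_vec 3" "y \<noteq> 0\<^sub>v 3" "?Q *\<^sub>v y = 0\<^sub>v n"
      by auto
    have "y $ 0 = 0 \<and> y $ 1 = 0 \<and> y $ 2 = 0"
      using ind y(3) mat_of_cols3_mult[OF q y(1)] by simp
    then have "y = 0\<^sub>v 3" using y(1) lt3 by (intro eq_vecI) auto
    then show False using y(2) by simp
  qed
  have "card (set (cols ?Q)) \<le> dim" using li_le_dim(2)[OF fin_dim _ li] cols q by simp
  moreover have "card (set (cols ?Q)) = 3" using cols dist by (simp add: distinct_card[OF dist, simplified])
  ultimately show ?thesis using dim_is_n by simp
qed


lemma intertwine:
  assumes X: "X \<in> carrier_mat n n" and M: "M \<in> carrier_mat 3 3"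
    and q: "q0 \<in> carrier_vec n" "q1 \<in> carrier_vec n" "q2 \<in> carrier_vec n"
    and h: "\<And>j. j < 3 \<Longrightarrow> X *\<^sub>v ([q0,q1,q2] ! j) = M$$(0,j) \<cdot>\<^sub>v q0 + M$$(1,j) \<cdot>\<^sub>v q1 + M$$(2,j) \<cdot>\<^sub>v q2"
  shows "X * mat_of_cols n [q0,q1,q2] = mat_of_cols n [q0,q1,q2] * (M :: 'k::field mat)"
proof (rule mat_col_eqI)
  have Qc: "mat_of_cols n [q0,q1,q2] \<in> carrier_mat n 3" by (rule carrier_matI) auto
  fix j assume "j < dim_col (mat_of_cols n [q0,q1,q2] * M)"
  then have j: "j < 3" using M by simp
  have qj: "[q0,q1,q2] ! j \<in> carrier_vec n" using j q lt3[OF j] by auto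
  have "col (X * mat_of_cols n [q0,q1,q2]) j = X *\<^sub>v col (mat_of_cols n [q0,q1,q2]) j"
    using col_mult2[OF X Qc j] .
  also have "\<dots> = X *\<^sub>v ([q0,q1,q2] ! j)" using col_mat_of_cols[of j "[q0,q1,q2]" n] j qj by simp
  also have "\<dots> = M$$(0,j) \<cdot>\<^sub>v q0 + M$$(1,j) \<cdot>\<^sub>v q1 + M$$(2,j) \<cdot>\<^sub>v q2" using h[OF j] .
  also have "\<dots> = mat_of_cols n [q0,q1,q2] *\<^sub>v col M j"
    using mat_of_cols3_mult[OF q, of "col M j"] M j by simp
  also have "\<dots> = col (mat_of_cols n [q0,q1,q2] * M) j" using col_mult2[OF Qc M j] by simp
  finally show "col (X * mat_of_cols n [q0,q1,q2]) j = col (mat_of_cols n [q0,q1,q2] * M) j" .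
qed (use X M in auto)

lemma conj_lemma:
  assumes P: "P \<in> carrier_mat k k" and Q: "Q \<in> carrier_mat k k" and X: "X \<in> carrier_mat k k"
    and M: "M \<in> carrier_mat k k" and PQ: "P * Q = 1\<^sub>m k" and QP: "Q * P = 1\<^sub>m k"
    and XQ: "X * Q = Q * (M :: 'k::field mat)"
  shows "P * X = M * P"
proof -
  have PX: "P * X \<in> carrier_mat k k" using P X by simp
  have "P * X = P * X * (Q * P)" using QP right_mult_one_mat[OF PX] by simp
  also have "\<dots> = (P * X * Q) * P" using assoc_mult_mat[OF PX Q P] by simp
  also have "P * X * Q = P * (X * Q)" using assoc_mult_mat[OF P X Q] .
  also have "\<dots> = (P * Q) * M" using XQ assoc_mult_mat[OF P Q M] by simp
  also have "\<dots> = M" using PQ M by simp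
  finally show ?thesis .
qed

lemma zero11:
  assumes "M \<in> carrier_mat 1 1" "v \<in> carrier_vec 1" "v \<noteq> 0\<^sub>v 1" "M *\<^sub>v v = (0\<^sub>v 1 :: 'k::field vec)"
  shows "M = 0\<^sub>m 1 1"
proof -
  obtain i where i: "i < 1" "v $ i \<noteq> 0" using nonzero_comp[OF assms(2,3)] by blast
  then have v0: "v $ 0 \<noteq> 0" by simp
  have "(M *\<^sub>v v) $ 0 = M $$ (0,0) * v $ 0"
    using assms(1,2) by (simp add: scalar_prod_def)
  then have "M $$ (0,0) = 0" using assms(4) v0 by simp
  then show ?thesis using assms(1) by (intro eq_matI) auto
qed

locale umod =
  fixes n :: nat and A B C :: "'k::field mat"
  assumes um: "um_module n A B C" and ch: "CHAR('k) = 2"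
begin

lemma carr[simp]: "A \<in> carrier_mat n n" "B \<in> carrier_mat n n" "C \<in> carrier_mat n n"
  using um unfolding um_module_def by auto

lemma mc[simp]: "X \<in> carrier_mat n n \<Longrightarrow> Y \<in> carrier_mat n n \<Longrightarrow> X * Y \<in> carrier_mat n n"
  by (rule mult_carrier_mat)

lemma mv[simp]: "X \<in> carrier_mat n n \<Longrightarrow> Y \<in> carrier_mat n n \<Longrightarrow> x \<in> carrier_vec n \<Longrightarrow>
  (X * Y) *\<^sub>v x = X *\<^sub>v (Y *\<^sub>v (x :: 'k vec))"
  by (rule assoc_mult_mat_vec)

lemma mvc[simp]: "X \<in> carrier_mat n n \<Longrightarrow> x \<in> carrier_vec n \<Longrightarrow> X *\<^sub>v (x :: 'k vec) \<in> carrier_vec n"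
  by (rule mult_mat_vec_carrier)

lemma rAB: assumes x: "x \<in> carrier_vec n" shows "A *\<^sub>v (B *\<^sub>v x) + B *\<^sub>v (A *\<^sub>v x) = C *\<^sub>v x"
proof -
  have e: "A * B + B * A = C" using um unfolding um_module_def by blast
  have "(A * B + B * A) *\<^sub>v x = C *\<^sub>v x" unfolding e ..
  moreover have h2: "(A * B + B * A) *\<^sub>v x = (A * B) *\<^sub>v x + (B * A) *\<^sub>v x"
    using add_mult_distrib_mat_vec[OF mult_carrier_mat[OF carr(1) carr(2)] mult_carrier_mat[OF carr(2) carr(1)] x] .
  ultimately have "(A * B) *\<^sub>v x + (B * A) *\<^sub>v x = C *\<^sub>v x" by simp
  then show ?thesis using x by (simp only: mv carr)
qed

lemma rAC: assumes x: "x \<in> carrier_vec n" shows "A *\<^sub>v (C *\<^sub>v x) + C *\<^sub>v (A *\<^sub>v x) = A *\<^sub>v x"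
proof -
  have e: "A * C + C * A = A" using um unfolding um_module_def by blast
  have "(A * C + C * A) *\<^sub>v x = A *\<^sub>v x" unfolding e ..
  moreover have h2: "(A * C + C * A) *\<^sub>v x = (A * C) *\<^sub>v x + (C * A) *\<^sub>v x"
    using add_mult_distrib_mat_vec[OF mult_carrier_mat[OF carr(1) carr(3)] mult_carrier_mat[OF carr(3) carr(1)] x] .
  ultimately have "(A * C) *\<^sub>v x + (C * A) *\<^sub>v x = A *\<^sub>v x" by (metis)
  then show ?thesis using x by (simp only: mv carr)
qed

lemma rBC: assumes x: "x \<in> carrier_vec n" shows "B *\<^sub>v (C *\<^sub>v x) + C *\<^sub>v (B *\<^sub>v x) = B *\<^sub>v x"
proof -
  have e: "B * C + C * B = B" using um unfolding um_module_def by blast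
  have "(B * C + C * B) *\<^sub>v x = B *\<^sub>v x" unfolding e ..
  moreover have h2: "(B * C + C * B) *\<^sub>v x = (B * C) *\<^sub>v x + (C * B) *\<^sub>v x"
    using add_mult_distrib_mat_vec[OF mult_carrier_mat[OF carr(2) carr(3)] mult_carrier_mat[OF carr(3) carr(2)] x] .
  ultimately have "(B * C) *\<^sub>v x + (C * B) *\<^sub>v x = B *\<^sub>v x" by (metis)
  then show ?thesis using x by (simp only: mv carr)
qed

lemma zmv: "x \<in> carrier_vec n \<Longrightarrow> 0\<^sub>m n n *\<^sub>v x = (0\<^sub>v n :: 'k vec)"
  by (intro eq_vecI) (auto simp: scalar_prod_def)

lemma rCC: assumes x: "x \<in> carrier_vec n" shows "C *\<^sub>v (C *\<^sub>v x) = C *\<^sub>v x"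
proof -
  have e: "C * C + C = 0\<^sub>m n n" using um unfolding um_module_def by blast
  have "(C * C + C) *\<^sub>v x = 0\<^sub>v n" unfolding e using zmv[OF x] .
  moreover have h2: "(C * C + C) *\<^sub>v x = (C * C) *\<^sub>v x + C *\<^sub>v x"
    using add_mult_distrib_mat_vec[OF mult_carrier_mat[OF carr(3) carr(3)] carr(3) x] .
  ultimately have "(C * C) *\<^sub>v x + C *\<^sub>v x = 0\<^sub>v n" by (metis)
  then have "C *\<^sub>v (C *\<^sub>v x) + C *\<^sub>v x = 0\<^sub>v n" using x by (simp only: mv carr)
  then show ?thesis by (rule vchar2[OF ch mvc[OF carr(3) mvc[OF carr(3) x]] mvc[OF carr(3) x]])
qed

lemma A4: assumes x: "x \<in> carrier_vec n" shows "A *\<^sub>v (A *\<^sub>v (A *\<^sub>v (A *\<^sub>v x))) = 0\<^sub>v n"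
proof -
  have "A ^\<^sub>m 4 = 0\<^sub>m n n" using um unfolding um_module_def by blast
  then have "A * A * A * A = 0\<^sub>m n n" using pow4[OF carr(1)] by simp
  then have "(A * A * A * A) *\<^sub>v x = 0\<^sub>v n" using zmv[OF x] by simp
  then show ?thesis using x by simp
qed

lemma B4: assumes x: "x \<in> carrier_vec n" shows "B *\<^sub>v (B *\<^sub>v (B *\<^sub>v (B *\<^sub>v x))) = 0\<^sub>v n"
proof -
  have "B ^\<^sub>m 4 = 0\<^sub>m n n" using um unfolding um_module_def by blast
  then have "B * B * B * B = 0\<^sub>m n n" using pow4[OF carr(2)] by simp
  then have "(B * B * B * B) *\<^sub>v x = 0\<^sub>v n" using zmv[OF x] by simp
  then show ?thesis using x by simp
qed

lemma B_not_surj: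
  assumes n0: "n > 0" and sp: "span3 u1 u2 u3 = carrier_vec n"
    and y: "y1 \<in> carrier_vec n" "y2 \<in> carrier_vec n" "y3 \<in> carrier_vec n"
    and u: "u1 = B *\<^sub>v y1" "u2 = B *\<^sub>v y2" "u3 = B *\<^sub>v y3"
  shows False
proof -
  have surj: "\<exists>y \<in> carrier_vec n. x = B *\<^sub>v y" if x: "x \<in> carrier_vec n" for x
  proof -
    have "x \<in> span3 u1 u2 u3" using sp x by simp
    then obtain a b c where x: "x = a \<cdot>\<^sub>v u1 + b \<cdot>\<^sub>v u2 + c \<cdot>\<^sub>v u3" unfolding span3_def by blast
    have "B *\<^sub>v (a \<cdot>\<^sub>v y1 + b \<cdot>\<^sub>v y2 + c \<cdot>\<^sub>v y3) = a \<cdot>\<^sub>v u1 + (b \<cdot>\<^sub>v u2 + c \<cdot>\<^sub>v u3)"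
      unfolding u using y by (simp add: mult_add_distrib_mat_vec[OF carr(2)] mult_mat_vec[OF carr(2)])
    also have "\<dots> = x" unfolding x u using y by (simp add: assoc_add_vec[of _ n])
    finally show ?thesis using y by (intro bexI[of _ "a \<cdot>\<^sub>v y1 + b \<cdot>\<^sub>v y2 + c \<cdot>\<^sub>v y3"]) auto
  qed
  have e: "unit_vec n 0 \<in> carrier_vec n" "unit_vec n 0 \<noteq> (0\<^sub>v n :: 'k vec)" using n0 by auto
  obtain z1 where z1: "z1 \<in> carrier_vec n" "unit_vec n 0 = B *\<^sub>v z1" using surj[OF e(1)] by blast
  obtain z2 where z2: "z2 \<in> carrier_vec n" "z1 = B *\<^sub>v z2" using surj[OF z1(1)] by blast
  obtain z3 where z3: "z3 \<in> carrier_vec n" "z2 = B *\<^sub>v z3" using surj[OF z2(1)] by blast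
  obtain z4 where z4: "z4 \<in> carrier_vec n" "z3 = B *\<^sub>v z4" using surj[OF z3(1)] by blast
  have "unit_vec n 0 = (0\<^sub>v n :: 'k vec)" using z1(2) z2(2) z3(2) z4(2) B4[OF z4(1)] by simp
  then show False using e(2) by simp
qed


lemma lin3:
  assumes M: "M \<in> carrier_mat n n" and c: "x \<in> carrier_vec n" "y \<in> carrier_vec n" "z \<in> carrier_vec n"
  shows "M *\<^sub>v (a \<cdot>\<^sub>v x + b \<cdot>\<^sub>v y + c \<cdot>\<^sub>v z) = a \<cdot>\<^sub>v (M *\<^sub>v x) + b \<cdot>\<^sub>v (M *\<^sub>v y) + c \<cdot>\<^sub>v (M *\<^sub>v (z :: 'k vec))"
  using c M by (simp add: mult_add_distrib_mat_vec[OF M] mult_mat_vec[OF M] assoc_add_vec[of _ n])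

lemma exists_v:
  assumes n0: "n > 0"
  obtains v where "v \<in> carrier_vec n" "v \<noteq> 0\<^sub>v n" "A *\<^sub>v v = 0\<^sub>v n" "C *\<^sub>v v = 0\<^sub>v n \<or> C *\<^sub>v v = v"
proof -
  let ?e = "unit_vec n 0 :: 'k vec"
  have e: "?e \<in> carrier_vec n" "?e \<noteq> 0\<^sub>v n" using n0 by auto
  have c1: "A *\<^sub>v ?e \<in> carrier_vec n" "A *\<^sub>v (A *\<^sub>v ?e) \<in> carrier_vec n"
    "A *\<^sub>v (A *\<^sub>v (A *\<^sub>v ?e)) \<in> carrier_vec n" using e(1) by simp_all
  have "\<exists>w. w \<in> carrier_vec n \<and> w \<noteq> 0\<^sub>v n \<and> A *\<^sub>v w = 0\<^sub>v n"
  proof (cases "A *\<^sub>v ?e = 0\<^sub>v n")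
    case True then show ?thesis using e by blast
  next
    case F1: False
    show ?thesis
    proof (cases "A *\<^sub>v (A *\<^sub>v ?e) = 0\<^sub>v n")
      case True then show ?thesis using F1 c1 by blast
    next
      case F2: False
      show ?thesis
      proof (cases "A *\<^sub>v (A *\<^sub>v (A *\<^sub>v ?e)) = 0\<^sub>v n")
        case True then show ?thesis using F2 c1 by blast
      next
        case F3: False
        then show ?thesis using A4[OF e(1)] c1 by blast
      qed
    qed
  qed
  then obtain w where w: "w \<in> carrier_vec n" "w \<noteq> 0\<^sub>v n" "A *\<^sub>v w = 0\<^sub>v n" by blast
  show ?thesis
  proof (cases "C *\<^sub>v w = 0\<^sub>v n")
    case True then show ?thesis using that w by blast
  next
    case False
    have cw: "C *\<^sub>v w \<in> carrier_vec n" using w(1) by simp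
    have "A *\<^sub>v (C *\<^sub>v w) + C *\<^sub>v (A *\<^sub>v w) = A *\<^sub>v w" by (rule rAC[OF w(1)])
    then have "A *\<^sub>v (C *\<^sub>v w) = 0\<^sub>v n" using w(3) mat_vec_zero[OF carr(3)] cw by simp
    moreover have "C *\<^sub>v (C *\<^sub>v w) = C *\<^sub>v w" by (rule rCC[OF w(1)])
    ultimately show ?thesis using that[of "C *\<^sub>v w"] False cw by blast
  qed
qed

lemma case0:
  assumes sm: "simple_module n A B C" and v: "v \<in> carrier_vec n" "v \<noteq> 0\<^sub>v n" "A *\<^sub>v v = 0\<^sub>v n" "C *\<^sub>v v = 0\<^sub>v n"
  shows "module_iso n A B C 1 V0_a V0_b V0_c"
proof -
  have n0: "n > 0" and S: "\<And>W. invariant_subspace n A B C W \<Longrightarrow> W = {0\<^sub>v n} \<or> W = carrier_vec n"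
    using sm unfolding simple_module_def by auto
  define v1 where "v1 = B *\<^sub>v v"
  define v2 where "v2 = B *\<^sub>v v1"
  define v3 where "v3 = B *\<^sub>v v2"
  have c: "v1 \<in> carrier_vec n" "v2 \<in> carrier_vec n" "v3 \<in> carrier_vec n"
    unfolding v1_def v2_def v3_def using v(1) by simp_all
  note z = mat_vec_zero[OF carr(1)] mat_vec_zero[OF carr(2)] mat_vec_zero[OF carr(3)]
  have Cv1: "C *\<^sub>v v1 = v1" using rBC[OF v(1)] v(4) z c by (simp add: v1_def[symmetric])
  have Av1: "A *\<^sub>v v1 = 0\<^sub>v n" using rAB[OF v(1)] v(3,4) z c by (simp add: v1_def[symmetric])
  have "v2 + C *\<^sub>v v2 = v2" using rBC[OF c(1)] Cv1 c by (simp add: v2_def[symmetric])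
  then have Cv2: "C *\<^sub>v v2 = 0\<^sub>v n" by (rule vcancel_l[OF c(2) mvc[OF carr(3) c(2)]])
  have Av2: "A *\<^sub>v v2 = v1" using rAB[OF c(1)] Av1 Cv1 z c by (simp add: v2_def[symmetric])
  have Cv3: "C *\<^sub>v v3 = v3" using rBC[OF c(2)] Cv2 z c by (simp add: v3_def[symmetric])
  have "A *\<^sub>v v3 + v2 = 0\<^sub>v n" using rAB[OF c(2)] Av2 Cv2 c by (simp add: v2_def[symmetric] v3_def[symmetric])
  then have Av3: "A *\<^sub>v v3 = v2" by (rule vchar2[OF ch mvc[OF carr(1) c(3)] c(2)])
  have Bv3: "B *\<^sub>v v3 = 0\<^sub>v n" using B4[OF v(1)] by (simp add: v1_def[symmetric] v2_def[symmetric] v3_def[symmetric])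
  note m = span3_mem[OF c]
  have inv1: "invariant_subspace n A B C (span3 v1 v2 v3)"
    by (rule span3_inv[OF carr c]) (use m Av1 Av2 Av3 Cv1 Cv2 Cv3 Bv3 in \<open>simp_all add: v2_def[symmetric] v3_def[symmetric]\<close>)
  have "span3 v1 v2 v3 \<noteq> carrier_vec n"
  proof
    assume "span3 v1 v2 v3 = carrier_vec n"
    from B_not_surj[OF n0 this v(1) c(1) c(2) v1_def v2_def v3_def] show False .
  qed
  then have "span3 v1 v2 v3 = {0\<^sub>v n}" using S[OF inv1] by blast
  then have v10: "v1 = 0\<^sub>v n" using m(1) by blast
  note m' = span3_mem[OF v(1) v(1) v(1)]
  have inv2: "invariant_subspace n A B C (span3 v v v)"
    by (rule span3_inv[OF carr v(1) v(1) v(1)]) (use m' v(3,4) v10 in \<open>simp_all add: v1_def[symmetric]\<close>)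
  have "span3 v v v \<noteq> {0\<^sub>v n}" using m'(1) v(2) by blast
  then have "span3 v v v = carrier_vec n" using S[OF inv2] by blast
  from dim_le3[OF this v(1) v(1) v(1)] have "n \<le> 1" by simp
  then have n1: "n = 1" using n0 by simp
  have Bv: "B *\<^sub>v v = 0\<^sub>v n" using v10 unfolding v1_def .
  have A0: "A = 0\<^sub>m 1 1" using zero11[of A v] carr(1) v(1-3) n1 by simp
  have B0: "B = 0\<^sub>m 1 1" using zero11[of B v] carr(2) v(1,2) Bv n1 by simp
  have C0: "C = 0\<^sub>m 1 1" using zero11[of C v] carr(3) v(1,2,4) n1 by simp
  have inv: "invertible_mat (1\<^sub>m 1 :: 'k mat)"
    unfolding invertible_mat_def inverts_mat_def square_mat.simps by (intro conjI exI[of _ "1\<^sub>m 1"]) auto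
  show ?thesis unfolding module_iso_def V0_a_def V0_b_def V0_c_def A0 B0 C0 n1
    using inv by (intro conjI bexI[of _ "1\<^sub>m 1"]) auto
qed


lemma case1:
  assumes sm: "simple_module n A B C" and v: "v \<in> carrier_vec n" "v \<noteq> 0\<^sub>v n" "A *\<^sub>v v = 0\<^sub>v n" "C *\<^sub>v v = v"
  shows "module_iso n A B C 3 V1_a V1_b V1_c"
proof -
  have n0: "n > 0" and S: "\<And>W. invariant_subspace n A B C W \<Longrightarrow> W = {0\<^sub>v n} \<or> W = carrier_vec n"
    using sm unfolding simple_module_def by auto
  define v1 where "v1 = B *\<^sub>v v"
  define v2 where "v2 = B *\<^sub>v v1"
  define v3 where "v3 = B *\<^sub>v v2"
  have c: "v1 \<in> carrier_vec n" "v2 \<in> carrier_vec n" "v3 \<in> carrier_vec n"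
    unfolding v1_def v2_def v3_def using v(1) by simp_all
  note z = mat_vec_zero[OF carr(1)] mat_vec_zero[OF carr(2)] mat_vec_zero[OF carr(3)]
  have "v1 + C *\<^sub>v v1 = v1" using rBC[OF v(1)] v(4) c by (simp add: v1_def[symmetric])
  then have Cv1: "C *\<^sub>v v1 = 0\<^sub>v n" by (rule vcancel_l[OF c(1) mvc[OF carr(3) c(1)]])
  have Av1: "A *\<^sub>v v1 = v" using rAB[OF v(1)] v(3,4) z c by (simp add: v1_def[symmetric])
  have Cv2: "C *\<^sub>v v2 = v2" using rBC[OF c(1)] Cv1 z c by (simp add: v2_def[symmetric])
  have "A *\<^sub>v v2 + v1 = 0\<^sub>v n" using rAB[OF c(1)] Av1 Cv1 c by (simp add: v1_def[symmetric] v2_def[symmetric])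
  then have Av2: "A *\<^sub>v v2 = v1" by (rule vchar2[OF ch mvc[OF carr(1) c(2)] c(1)])
  have "v3 + C *\<^sub>v v3 = v3" using rBC[OF c(2)] Cv2 c by (simp add: v3_def[symmetric])
  then have Cv3: "C *\<^sub>v v3 = 0\<^sub>v n" by (rule vcancel_l[OF c(3) mvc[OF carr(3) c(3)]])
  have "A *\<^sub>v v3 + v2 = v2" using rAB[OF c(2)] Av2 Cv2 c by (simp add: v2_def[symmetric] v3_def[symmetric])
  then have Av3: "A *\<^sub>v v3 = 0\<^sub>v n" by (rule vcancel_r[OF mvc[OF carr(1) c(3)] c(2)])
  have Bv3: "B *\<^sub>v v3 = 0\<^sub>v n" using B4[OF v(1)] by (simp add: v1_def[symmetric] v2_def[symmetric] v3_def[symmetric])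
  note m = span3_mem[OF c(3) c(3) c(3)]
  have inv1: "invariant_subspace n A B C (span3 v3 v3 v3)"
    by (rule span3_inv[OF carr c(3) c(3) c(3)]) (use m Av3 Cv3 Bv3 in simp_all)
  have "span3 v3 v3 v3 \<noteq> carrier_vec n"
  proof
    assume "span3 v3 v3 v3 = carrier_vec n"
    from B_not_surj[OF n0 this c(2) c(2) c(2) v3_def v3_def v3_def] show False .
  qed
  then have "span3 v3 v3 v3 = {0\<^sub>v n}" using S[OF inv1] by blast
  then have v30: "v3 = 0\<^sub>v n" using m(1) by blast
  note m' = span3_mem[OF c(2) c(1) v(1)]
  have inv2: "invariant_subspace n A B C (span3 v2 v1 v)"
    by (rule span3_inv[OF carr c(2) c(1) v(1)])
      (use m' v(3,4) Av1 Av2 Cv1 Cv2 v30 in \<open>simp_all add: v1_def[symmetric] v2_def[symmetric] v3_def[symmetric]\<close>)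
  have "span3 v2 v1 v \<noteq> {0\<^sub>v n}" using m'(3) v(2) by blast
  then have sp: "span3 v2 v1 v = carrier_vec n" using S[OF inv2] by blast
  obtain i where i: "i < n" "v $ i \<noteq> 0" using nonzero_comp[OF v(1,2)] by blast
  have ind: "a = 0 \<and> b = 0 \<and> cc = 0" if L: "a \<cdot>\<^sub>v v2 + b \<cdot>\<^sub>v v1 + cc \<cdot>\<^sub>v v = 0\<^sub>v n" for a b cc
  proof -
    have AL: "A *\<^sub>v (a \<cdot>\<^sub>v v2 + b \<cdot>\<^sub>v v1 + cc \<cdot>\<^sub>v v) = a \<cdot>\<^sub>v v1 + b \<cdot>\<^sub>v v + cc \<cdot>\<^sub>v 0\<^sub>v n"
      using lin3[OF carr(1) c(2) c(1) v(1)] Av1 Av2 v(3) by simp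
    have AAL: "A *\<^sub>v (a \<cdot>\<^sub>v v1 + b \<cdot>\<^sub>v v + cc \<cdot>\<^sub>v 0\<^sub>v n) = a \<cdot>\<^sub>v v + b \<cdot>\<^sub>v 0\<^sub>v n + cc \<cdot>\<^sub>v 0\<^sub>v n"
      using lin3[OF carr(1) c(1) v(1) zero_carrier_vec] Av1 v(3) z(1) by simp
    have e1: "a \<cdot>\<^sub>v v1 + b \<cdot>\<^sub>v v + cc \<cdot>\<^sub>v 0\<^sub>v n = 0\<^sub>v n" using AL L z(1) by simp
    have e2: "a \<cdot>\<^sub>v v + b \<cdot>\<^sub>v 0\<^sub>v n + cc \<cdot>\<^sub>v 0\<^sub>v n = 0\<^sub>v n" using AAL e1 z(1) by simp
    have "(a \<cdot>\<^sub>v v + b \<cdot>\<^sub>v 0\<^sub>v n + cc \<cdot>\<^sub>v 0\<^sub>v n) $ i = 0" using e2 i by simp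
    then have "a * v $ i = 0" using i v(1) by simp
    then have a0: "a = 0" using i by simp
    have "(a \<cdot>\<^sub>v v1 + b \<cdot>\<^sub>v v + cc \<cdot>\<^sub>v 0\<^sub>v n) $ i = 0" using e1 i by simp
    then have "b * v $ i = 0" using i v(1) c a0 by simp
    then have b0: "b = 0" using i by simp
    have "(a \<cdot>\<^sub>v v2 + b \<cdot>\<^sub>v v1 + cc \<cdot>\<^sub>v v) $ i = 0" using L i by simp
    then have "cc * v $ i = 0" using i v(1) c a0 b0 by simp
    then have "cc = 0" using i by simp
    then show ?thesis using a0 b0 by simp
  qed
  have d1: "v2 \<noteq> v1"
  proof
    assume e: "v2 = v1"
    have "1 \<cdot>\<^sub>v v2 + (-1) \<cdot>\<^sub>v v1 + 0 \<cdot>\<^sub>v v = 0\<^sub>v n" unfolding e using c v(1) by (intro eq_vecI) auto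
    then show False using ind by fastforce
  qed
  have d2: "v2 \<noteq> v"
  proof
    assume e: "v2 = v"
    have "1 \<cdot>\<^sub>v v2 + 0 \<cdot>\<^sub>v v1 + (-1) \<cdot>\<^sub>v v = 0\<^sub>v n" unfolding e using c v(1) by (intro eq_vecI) auto
    then show False using ind by fastforce
  qed
  have d3: "v1 \<noteq> v"
  proof
    assume e: "v1 = v"
    have "0 \<cdot>\<^sub>v v2 + 1 \<cdot>\<^sub>v v1 + (-1) \<cdot>\<^sub>v v = 0\<^sub>v n" unfolding e using c v(1) by (intro eq_vecI) auto
    then show False using ind by fastforce
  qed
  have dist: "distinct [v2, v1, v]" using d1 d2 d3 by simp
  have "3 \<le> n" by (rule lin_indpt3_dim[OF c(2) c(1) v(1) dist ind])
  moreover have "n \<le> card {v2, v1, v}" by (rule dim_le3[OF sp c(2) c(1) v(1)])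
  moreover have "card {v2, v1, v} = 3" using d1 d2 d3 by simp
  ultimately have n3: "n = 3" by simp
  let ?Q = "mat_of_cols n [v2, v1, v]"
  have Qc: "?Q \<in> carrier_mat n n" using n3 by (intro carrier_matI) auto
  have "\<not> (\<exists>y. y \<in> carrier_vec n \<and> y \<noteq> 0\<^sub>v n \<and> ?Q *\<^sub>v y = 0\<^sub>v n)"
  proof
    assume "\<exists>y. y \<in> carrier_vec n \<and> y \<noteq> 0\<^sub>v n \<and> ?Q *\<^sub>v y = 0\<^sub>v n"
    then obtain y where y: "y \<in> carrier_vec n" "y \<noteq> 0\<^sub>v n" "?Q *\<^sub>v y = 0\<^sub>v n" by blast
    have y3: "y \<in> carrier_vec 3" using y(1) n3 by simp
    have "y $ 0 \<cdot>\<^sub>v v2 + y $ 1 \<cdot>\<^sub>v v1 + y $ 2 \<cdot>\<^sub>v v = 0\<^sub>v n" using y(3) mat_of_cols3_mult[OF c(2) c(1) v(1) y3] by simp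
    then have "y $ 0 = 0 \<and> y $ 1 = 0 \<and> y $ 2 = 0" by (rule ind)
    then have "y = 0\<^sub>v n" using y(1) n3 lt3 by (intro eq_vecI) auto
    then show False using y(2) by simp
  qed
  then have "det ?Q \<noteq> 0" using det_0_iff_vec_prod_zero[OF Qc] by blast
  from det_non_zero_imp_unit[OF Qc this, of "()"]
  obtain P where P: "P \<in> carrier_mat n n" "P * ?Q = 1\<^sub>m n" "?Q * P = 1\<^sub>m n"
    unfolding Units_def ring_mat_simps by auto
  have V1c: "V1_a \<in> carrier_mat n n" "V1_b \<in> carrier_mat n n" "V1_c \<in> carrier_mat n n"
    using n3 by simp_all
  have AQ: "A * ?Q = ?Q * V1_a"
  proof (rule intertwine[OF carr(1) V1_carrier(1) c(2) c(1) v(1)])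
    fix j :: nat assume j: "j < 3"
    show "A *\<^sub>v ([v2, v1, v] ! j) = V1_a $$ (0, j) \<cdot>\<^sub>v v2 + V1_a $$ (1, j) \<cdot>\<^sub>v v1 + V1_a $$ (2, j) \<cdot>\<^sub>v v"
      using lt3[OF j]
      by (elim disjE) (auto intro!: eq_vecI simp: Av1 Av2 v(3) c v(1) carrier_vecD[OF v(1)] carrier_vecD[OF c(1)] carrier_vecD[OF c(2)])
  qed
  have BQ: "B * ?Q = ?Q * V1_b"
  proof (rule intertwine[OF carr(2) V1_carrier(2) c(2) c(1) v(1)])
    fix j :: nat assume j: "j < 3"
    have Bv2: "B *\<^sub>v v2 = 0\<^sub>v n" using v30 unfolding v3_def .
    show "B *\<^sub>v ([v2, v1, v] ! j) = V1_b $$ (0, j) \<cdot>\<^sub>v v2 + V1_b $$ (1, j) \<cdot>\<^sub>v v1 + V1_b $$ (2, j) \<cdot>\<^sub>v v"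
      using lt3[OF j] by (elim disjE) (auto intro!: eq_vecI simp: Bv2 v1_def[symmetric] v2_def[symmetric] c v(1) carrier_vecD[OF v(1)] carrier_vecD[OF c(1)] carrier_vecD[OF c(2)])
  qed
  have CQ: "C * ?Q = ?Q * V1_c"
  proof (rule intertwine[OF carr(3) V1_carrier(3) c(2) c(1) v(1)])
    fix j :: nat assume j: "j < 3"
    show "C *\<^sub>v ([v2, v1, v] ! j) = V1_c $$ (0, j) \<cdot>\<^sub>v v2 + V1_c $$ (1, j) \<cdot>\<^sub>v v1 + V1_c $$ (2, j) \<cdot>\<^sub>v v"
      using lt3[OF j] by (elim disjE) (auto intro!: eq_vecI simp: Cv1 Cv2 v(4) c v(1) carrier_vecD[OF v(1)] carrier_vecD[OF c(1)] carrier_vecD[OF c(2)])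
  qed
  have PA: "P * A = V1_a * P" by (rule conj_lemma[OF P(1) Qc carr(1) V1c(1) P(2,3) AQ])
  have PB: "P * B = V1_b * P" by (rule conj_lemma[OF P(1) Qc carr(2) V1c(2) P(2,3) BQ])
  have PC: "P * C = V1_c * P" by (rule conj_lemma[OF P(1) Qc carr(3) V1c(3) P(2,3) CQ])
  have inv: "invertible_mat P"
    unfolding invertible_mat_def inverts_mat_def
  proof (intro conjI exI[of _ ?Q])
    show "square_mat P" using P(1) by simp
    show "P * ?Q = 1\<^sub>m (dim_row P)" using P(1,2) by simp
    show "?Q * P = 1\<^sub>m (dim_row ?Q)" using P(3) by simp
  qed
  show ?thesis unfolding module_iso_def using n3 P(1) inv PA PB PC by blast
qed

lemma classify:
  assumes sm: "simple_module n A B C"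
  shows "module_iso n A B C 1 V0_a V0_b V0_c \<or> module_iso n A B C 3 V1_a V1_b V1_c"
proof -
  have n0: "n > 0" using sm unfolding simple_module_def by auto
  obtain v where v: "v \<in> carrier_vec n" "v \<noteq> 0\<^sub>v n" "A *\<^sub>v v = 0\<^sub>v n" "C *\<^sub>v v = 0\<^sub>v n \<or> C *\<^sub>v v = v"
    using exists_v[OF n0] by blast
  show ?thesis using v(4) case0[OF sm v(1-3)] case1[OF sm v(1-3)] by blast
qed

end


theorem proposition3p1:
  assumes "CHAR('k::alg_closed_field) = 2"
  shows "simple_module 1 (V0_a :: 'k mat) V0_b V0_c \<and>
         simple_module 3 (V1_a :: 'k mat) V1_b V1_c \<and>
         (\<forall>n (A :: 'k mat) B C. simple_module n A B C \<longrightarrow>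
            module_iso n A B C 1 V0_a V0_b V0_c \<or> module_iso n A B C 3 V1_a V1_b V1_c)"
proof (intro conjI allI impI)
  show "simple_module 1 (V0_a :: 'k mat) V0_b V0_c" by (rule V0_simple)
  show "simple_module 3 (V1_a :: 'k mat) V1_b V1_c" by (rule V1_simple[OF assms])
  fix n and A B C :: "'k mat"
  assume sm: "simple_module n A B C"
  then have um: "um_module n A B C" unfolding simple_module_def by blast
  interpret umod n A B C using um assms by unfold_locales auto
  show "module_iso n A B C 1 V0_a V0_b V0_c \<or> module_iso n A B C 3 V1_a V1_b V1_c"
    by (rule classify[OF sm])
qed

end
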